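(* Suppose $h$ is odd. Then for every $p\in\mathcal P$, if $\mu(p)=\mu_0$ and $D_{\mu(p)}(p)=D_{\mu(p^r)}(p^r)$, then $\mu(p^r)>\mu_0$.
   Context: Let $n,h\ge2$, $N=\{1,\dots,n\}$, $H=\{1,\dots,h\}$, $\mathcal P$ the set of $h$-tuples of linear orders on $N$, $p^r$ the profile obtained by reversing each order; $x>_{p_i}y$ means $x\neq y$ and $p_i$ ranks $x$ above $y$; for an integer $\mu\in(h/2,h]$, $D_\mu(p)=\{x\in N: \forall y,\ |\{i: y>_{p_i}x\}|<\mu\}$; $\mu(p)=\min\{\mu\in\mathbb N\cap(h/2,h]: D_\mu(p)\ne\varnothing\}$; $\mu_0=\lceil(h+1)/2\rceil$. *)

theory Defs
  imports Complex_Main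
begin

(* A linear order on N = {1..n} is a relation r with (x,y) \<in> r meaning
   "x is ranked at least as high as y". *)
definition is_lin_order :: "nat \<Rightarrow> (nat \<times> nat) set \<Rightarrow> bool" where
  "is_lin_order n r \<longleftrightarrow> linear_order_on {1..n} r \<and> r \<subseteq> {1..n} \<times> {1..n}"

definition is_profile :: "nat \<Rightarrow> nat \<Rightarrow> (nat \<Rightarrow> (nat \<times> nat) set) \<Rightarrow> bool" where
  "is_profile n h p \<longleftrightarrow> (\<forall>i\<in>{1..h}. is_lin_order n (p i))"

definition rev_profile :: "(nat \<Rightarrow> (nat \<times> nat) set) \<Rightarrow> nat \<Rightarrow> (nat \<times> nat) set" where
  "rev_profile p = (\<lambda>i. (p i)\<inverse>)"

definition pref :: "(nat \<times> nat) set \<Rightarrow> nat \<Rightarrow> nat \<Rightarrow> bool" where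
  "pref r x y \<longleftrightarrow> x \<noteq> y \<and> (x, y) \<in> r"

definition D :: "nat \<Rightarrow> nat \<Rightarrow> nat \<Rightarrow> (nat \<Rightarrow> (nat \<times> nat) set) \<Rightarrow> nat set" where
  "D n h \<mu> p = {x \<in> {1..n}. \<forall>y\<in>{1..n}. card {i \<in> {1..h}. pref (p i) y x} < \<mu>}"

definition mu :: "nat \<Rightarrow> nat \<Rightarrow> (nat \<Rightarrow> (nat \<times> nat) set) \<Rightarrow> nat" where
  "mu n h p = (LEAST \<mu>::nat. real h / 2 < real \<mu> \<and> \<mu> \<le> h \<and> D n h \<mu> p \<noteq> {})"

definition mu0 :: "nat \<Rightarrow> nat" where
  "mu0 h = nat \<lceil>(real h + 1) / 2\<rceil>"

end

theory Submission
  imports Defs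
begin

lemma exists_top:
  assumes "is_profile n h p" "h \<ge> 1" "n \<ge> 1"
  shows "\<exists>z\<in>{1..n}. \<forall>y\<in>{1..n}. \<not> pref (p 1) y z"
proof -
  have lo: "is_lin_order n (p 1)" using assms unfolding is_profile_def by auto
  hence sub: "p 1 \<subseteq> {1..n} \<times> {1..n}" and lin: "linear_order_on {1..n} (p 1)"
    unfolding is_lin_order_def by auto
  have "finite (p 1)" using sub finite_subset by blast
  hence wf: "wf (p 1 - Id)"
    using finite_acyclic_wf[OF _ linear_order_on_acyclic[OF lin]] by auto
  have "(1::nat) \<in> {1..n}" using assms by auto
  then obtain z where "z \<in> {1..n}" "\<forall>y. (y, z) \<in> p 1 - Id \<longrightarrow> y \<notin> {1..n}"
    using wf unfolding wf_eq_minimal by metis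
  thus ?thesis unfolding pref_def by blast
qed

lemma D_h_nonempty:
  assumes "is_profile n h p" "h \<ge> 1" "n \<ge> 1"
  shows "D n h h p \<noteq> {}"
proof -
  obtain z where z: "z \<in> {1..n}" "\<forall>y\<in>{1..n}. \<not> pref (p 1) y z"
    using exists_top[OF assms] by blast
  have "\<forall>y\<in>{1..n}. card {i \<in> {1..h}. pref (p i) y z} < h"
  proof
    fix y assume "y \<in> {1..n}"
    have "{i \<in> {1..h}. pref (p i) y z} \<subseteq> {2..h}" 
    proof
      fix i assume i: "i \<in> {i \<in> {1..h}. pref (p i) y z}"
      hence "i \<noteq> 1" using z \<open>y \<in> {1..n}\<close> by (metis (mono_tags, lifting) mem_Collect_eq)
      thus "i \<in> {2..h}" using i by auto
    qed
    hence "card {i \<in> {1..h}. pref (p i) y z} \<le> card {2..h}" by (intro card_mono) auto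
    thus "card {i \<in> {1..h}. pref (p i) y z} < h" using assms by simp
  qed
  thus ?thesis using z unfolding D_def by auto
qed

theorem lemma7:
  fixes n h :: nat and p :: "nat \<Rightarrow> (nat \<times> nat) set"
  assumes "n \<ge> 2" and "h \<ge> 2" and "odd h"
    and "is_profile n h p"
    and "mu n h p = mu0 h"
    and "D n h (mu n h p) p = D n h (mu n h (rev_profile p)) (rev_profile p)"
  shows "mu n h (rev_profile p) > mu0 h"
proof (rule ccontr)
  assume c: "\<not> ?thesis"
  obtain k where hk: "h = 2*k+1" using assms(3) oddE by blast
  have "(real h + 1) / 2 = real (k+1)" unfolding hk by simp
  hence m0: "mu0 h = k+1" unfolding mu0_def by (metis ceiling_of_nat nat_int)
  have P: "real h / 2 < real h \<and> h \<le> h \<and> D n h h p \<noteq> {}"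
    using D_h_nonempty[OF assms(4)] assms by auto
  have "D n h (mu n h p) p \<noteq> {}"
    unfolding mu_def using LeastI[of "\<lambda>\<mu>. real h / 2 < real \<mu> \<and> \<mu> \<le> h \<and> D n h \<mu> p \<noteq> {}", OF P]
    by blast
  then obtain x where x1: "x \<in> D n h (mu n h p) p" by blast
  hence x2: "x \<in> D n h (mu n h (rev_profile p)) (rev_profile p)" using assms(6) by simp
  have xn: "x \<in> {1..n}" using x1 unfolding D_def by auto
  obtain y where y: "y \<in> {1..n}" "y \<noteq> x"
  proof (cases "x = 1")
    case True thus ?thesis using that[of 2] assms(1) by auto
  next
    case False thus ?thesis using that[of 1] assms(1) xn by auto
  qed
  define A where "A = {i \<in> {1..h}. pref (p i) y x}"
  define B where "B = {i \<in> {1..h}. pref (p i) x y}"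
  have cA: "card A < k+1" using x1 y assms(5) m0 unfolding D_def A_def by auto
  have "card {i \<in> {1..h}. pref (rev_profile p i) y x} < mu n h (rev_profile p)"
    using x2 y unfolding D_def by auto
  moreover have "{i \<in> {1..h}. pref (rev_profile p i) y x} = B"
    unfolding B_def rev_profile_def pref_def by auto
  ultimately have cB: "card B < k+1" using c m0 by auto
  have "{1..h} \<subseteq> A \<union> B"
  proof
    fix i assume i: "i \<in> {1..h}"
    hence "linear_order_on {1..n} (p i)" using assms(4) unfolding is_profile_def is_lin_order_def by auto
    hence "(x, y) \<in> p i \<or> (y, x) \<in> p i"
      using xn y unfolding linear_order_on_def total_on_def by auto
    thus "i \<in> A \<union> B" using i y unfolding A_def B_def pref_def by auto
  qed
  hence "card {1..h} \<le> card (A \<union> B)" by (intro card_mono) (auto simp: A_def B_def)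
  also have "\<dots> \<le> card A + card B" by (rule card_Un_le)
  finally show False using cA cB hk by simp
qed

end
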